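(* The algebra $\mathcal{O}_{nc}(\mathrm{GL}_2)$ has a $k$-basis consisting of the elements $\delta^{x_0}w_1\delta^{x_1}w_2\cdots w_n\delta^{x_n}$ ($n\ge0$) where $x_i\in\mathbb{Z}$, $x_i\ne0$ for $0<i<n$, each $w_i$ is a non-empty word in $a,b,c,d$ with non-decreasing row index (no letter from $\{c,d\}$ is followed by a letter from $\{a,b\}$), and whenever $x_i=-1$ with $0<i<n$, the letter immediately to the left of $\delta^{-1}$ and the letter immediately to the right of it have non-decreasing column index (i.e. the pair is not (letter of $\{b,d\}$, letter of $\{a,c\}$)).
   Context: $\mathcal{O}_{nc}(\mathrm{GL}_2)$ is the $k$-algebra generated by $a,b,c,d,\delta,\delta^{-1}$ subject to $ac=ca$, $bd=db$, $ad-cb=\delta=da-bc$, $\delta\delta^{-1}=1=\delta^{-1}\delta$, $a\delta^{-1}d-b\delta^{-1}c=1=d\delta^{-1}a-c\delta^{-1}b$, $b\delta^{-1}a=a\delta^{-1}b$, $c\delta^{-1}d=d\delta^{-1}c$. Row index: $a,b$ have row index 1 and $c,d$ row index 2; column index: $a,c$ have column index 1 and $b,d$ column index 2 (entries of the matrix $\begin{pmatrix}a&b\\c&d\end{pmatrix}$). *)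

theory Defs
  imports Main
begin

text \<open>Generators of the free algebra: a, b, c, d, delta, delta inverse.\<close>
datatype gen = La | Lb | Lc | Ld | Dl | Dli

type_synonym word = "gen list"

text \<open>Elements of the free k-algebra on gen: finitely supported functions word => k.
  A formal linear combination is given as a list of (coefficient, word).\<close>
definition lincomb :: "('k::field \<times> word) list \<Rightarrow> word \<Rightarrow> 'k" where
  "lincomb ps w = (\<Sum>(c, x)\<leftarrow>ps. if x = w then c else 0)"

definition sandw :: "word \<Rightarrow> ('k \<times> word) list \<Rightarrow> word \<Rightarrow> ('k \<times> word) list" where
  "sandw u r v = map (\<lambda>(e, x). (e, u @ x @ v)) r"

text \<open>Defining relations of O_nc(GL_2), each written as an element r meaning r = 0.\<close>
definition rels :: "('k::field \<times> word) list set" where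
  "rels = {
     [(1, [La, Lc]), (-1, [Lc, La])],
     [(1, [Lb, Ld]), (-1, [Ld, Lb])],
     [(1, [La, Ld]), (-1, [Lc, Lb]), (-1, [Dl])],
     [(1, [Ld, La]), (-1, [Lb, Lc]), (-1, [Dl])],
     [(1, [Dl, Dli]), (-1, [])],
     [(1, [Dli, Dl]), (-1, [])],
     [(1, [La, Dli, Ld]), (-1, [Lb, Dli, Lc]), (-1, [])],
     [(1, [Ld, Dli, La]), (-1, [Lc, Dli, Lb]), (-1, [])],
     [(1, [Lb, Dli, La]), (-1, [La, Dli, Lb])],
     [(1, [Lc, Dli, Ld]), (-1, [Ld, Dli, Lc])] }"

text \<open>The two-sided ideal generated by the relations (as a subset of the free algebra):
  the k-span of all u * r * v with u, v words and r a relation.\<close>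
inductive_set rel_ideal :: "(word \<Rightarrow> 'k::field) set" where
  zero: "(\<lambda>_. 0) \<in> rel_ideal"
| step: "f \<in> rel_ideal \<Longrightarrow> r \<in> rels \<Longrightarrow>
          (\<lambda>w. f w + c * lincomb (sandw u r v) w) \<in> rel_ideal"

definition supp :: "(word \<Rightarrow> 'k::zero) \<Rightarrow> word set" where
  "supp f = {w. f w \<noteq> 0}"

fun row :: "gen \<Rightarrow> nat" where
  "row La = 1" | "row Lb = 1" | "row Lc = 2" | "row Ld = 2" | "row Dl = 0" | "row Dli = 0"

fun col :: "gen \<Rightarrow> nat" where
  "col La = 1" | "col Lc = 1" | "col Lb = 2" | "col Ld = 2" | "col Dl = 0" | "col Dli = 0"

definition delpow :: "int \<Rightarrow> word" where
  "delpow x = (if 0 \<le> x then replicate (nat x) Dl else replicate (nat (- x)) Dli)"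

definition good_word :: "word \<Rightarrow> bool" where
  "good_word w \<longleftrightarrow> w \<noteq> [] \<and> set w \<subseteq> {La, Lb, Lc, Ld} \<and>
     (\<forall>i. Suc i < length w \<longrightarrow> row (w ! i) \<le> row (w ! Suc i))"

text \<open>The word delta^x0 w1 delta^x1 ... wn delta^xn, with ps = [(w1,x1),...,(wn,xn)].\<close>
definition nf_word :: "int \<Rightarrow> (word \<times> int) list \<Rightarrow> word" where
  "nf_word x0 ps = delpow x0 @ concat (map (\<lambda>(w, x). w @ delpow x) ps)"

definition nf_data :: "(word \<times> int) list \<Rightarrow> bool" where
  "nf_data ps \<longleftrightarrow> (\<forall>j < length ps. good_word (fst (ps ! j))) \<and>
     (\<forall>j. Suc j < length ps \<longrightarrow> snd (ps ! j) \<noteq> 0 \<and>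
        (snd (ps ! j) = -1 \<longrightarrow>
           col (last (fst (ps ! j))) \<le> col (hd (fst (ps ! Suc j)))))"

definition normal_words :: "word set" where
  "normal_words = {nf_word x0 ps | x0 ps. nf_data ps}"

end

theory Submission
  imports Defs
begin


fun dig :: "gen \<Rightarrow> nat" where
  "dig La = 1" | "dig Lb = 2" | "dig Lc = 3" | "dig Ld = 4" | "dig Dl = 5" | "dig Dli = 6"

fun val :: "word \<Rightarrow> nat" where
  "val [] = 0" | "val (x#xs) = dig x * 7 ^ length xs + val xs"

lemma dig_pos: "1 \<le> dig x" and dig_le: "dig x \<le> 6" by (cases x; simp)+

lemma dig_inj: "dig x = dig y \<Longrightarrow> x = y"
  by (cases x; cases y; simp)

lemma val_append: "val (xs @ ys) = val xs * 7 ^ length ys + val ys"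
  by (induction xs) (auto simp: algebra_simps power_add)

lemma val_lt: "val xs < 7 ^ length xs"
proof (induction xs)
  case (Cons x xs)
  have "dig x * 7 ^ length xs + val xs < dig x * 7 ^ length xs + 7 ^ length xs" using Cons by simp
  also have "\<dots> = (dig x + 1) * 7 ^ length xs" by simp
  also have "\<dots> \<le> 7 * 7 ^ length xs" using dig_le[of x] by (intro mult_right_mono) auto
  finally show ?case by simp
qed simp

lemma val_ge: "xs \<noteq> [] \<Longrightarrow> 7 ^ (length xs - 1) \<le> val xs"
proof (cases xs)
  case (Cons x ys)
  have "7 ^ length ys \<le> dig x * 7 ^ length ys" using dig_pos[of x] by simp
  then show ?thesis using Cons by (simp add: trans_le_add1)
qed simp

lemma val_len_lt: "length xs < length ys \<Longrightarrow> val xs < val ys"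
proof -
  assume a: "length xs < length ys"
  then have "ys \<noteq> []" by auto
  have "val xs < 7 ^ length xs" by (rule val_lt)
  also have "\<dots> \<le> 7 ^ (length ys - 1)" using a by (intro power_increasing) auto
  also have "\<dots> \<le> val ys" using val_ge[OF \<open>ys \<noteq> []\<close>] .
  finally show ?thesis .
qed

lemma val_lt_len: "val xs < val ys \<Longrightarrow> length xs \<le> length ys"
  using val_len_lt[of ys xs] by linarith

lemma val_inj_same_len: "length xs = length ys \<Longrightarrow> val xs = val ys \<Longrightarrow> xs = ys"
proof (induction xs arbitrary: ys)
  case (Cons x xs)
  then obtain y ys' where ys: "ys = y # ys'" by (cases ys) auto
  let ?n = "7 ^ length xs"
  have l: "length ys' = length xs" using Cons ys by simp
  have e: "dig x * ?n + val xs = dig y * ?n + val ys'" using Cons ys l by simp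
  have "(dig x * ?n + val xs) div ?n = dig x" using val_lt[of xs] by simp
  moreover have "(dig y * ?n + val ys') div ?n = dig y" using val_lt[of ys'] l by simp
  ultimately have "dig x = dig y" using e by simp
  then have "x = y" by (rule dig_inj)
  moreover have "val xs = val ys'" using e \<open>dig x = dig y\<close> by simp
  ultimately show ?case using Cons.IH l ys by auto
qed simp

lemma val_inj: "val xs = val ys \<Longrightarrow> xs = ys"
  by (metis val_inj_same_len val_len_lt nat_neq_iff)

lemma val_mono_strict: "val w < val w' \<Longrightarrow> val (u @ w @ v) < val (u @ w' @ v)"
proof -
  assume a: "val w < val w'"
  have "val (u @ w) < val (u @ w')"
  proof (cases "length w = length w'")
    case True
    then show ?thesis using a by (simp add: val_append)
  next
    case False
    then have "length w < length w'" using val_lt_len[OF a] by simp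
    then show ?thesis by (intro val_len_lt) simp
  qed
  then have "val (u @ w) * 7 ^ length v < val (u @ w') * 7 ^ length v" by simp
  then show ?thesis by (simp add: val_append[of "u @ w" v, simplified] val_append[of "u @ w'" v, simplified])
qed

lemma val_mono: "val w \<le> val w' \<Longrightarrow> val (u @ w @ v) \<le> val (u @ w' @ v)"
  using val_mono_strict[of w w' u v] val_inj[of w w'] by (cases "val w = val w'") auto



definition R1 :: "('k::field \<times> word) list" where "R1 = [(1, [La, Lc]), (-1, [Lc, La])]"
definition R2 :: "('k::field \<times> word) list" where "R2 = [(1, [Lb, Ld]), (-1, [Ld, Lb])]"
definition R3 :: "('k::field \<times> word) list" where "R3 = [(1, [La, Ld]), (-1, [Lc, Lb]), (-1, [Dl])]"
definition R4 :: "('k::field \<times> word) list" where "R4 = [(1, [Ld, La]), (-1, [Lb, Lc]), (-1, [Dl])]"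
definition R5 :: "('k::field \<times> word) list" where "R5 = [(1, [Dl, Dli]), (-1, [])]"
definition R6 :: "('k::field \<times> word) list" where "R6 = [(1, [Dli, Dl]), (-1, [])]"
definition R7 :: "('k::field \<times> word) list" where "R7 = [(1, [La, Dli, Ld]), (-1, [Lb, Dli, Lc]), (-1, [])]"
definition R8 :: "('k::field \<times> word) list" where "R8 = [(1, [Ld, Dli, La]), (-1, [Lc, Dli, Lb]), (-1, [])]"
definition R9 :: "('k::field \<times> word) list" where "R9 = [(1, [Lb, Dli, La]), (-1, [La, Dli, Lb])]"
definition R10 :: "('k::field \<times> word) list" where "R10 = [(1, [Lc, Dli, Ld]), (-1, [Ld, Dli, Lc])]"

lemmas Rdefs = R1_def R2_def R3_def R4_def R5_def R6_def R7_def R8_def R9_def R10_def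

lemma rels_eq: "rels = {R1, R2, R3, R4, R5, R6, R7, R8, R9, R10}"
  by (simp add: rels_def Rdefs)

definition lw :: "('k \<times> word) list \<Rightarrow> word" where
  "lw r = foldr (\<lambda>p acc. if val acc < val (snd p) then snd p else acc) r []"

definition lc :: "('k::field \<times> word) list \<Rightarrow> 'k" where
  "lc r = lincomb r (lw r)"

lemma lw_R: "lw R1 = [Lc, La]" "lw R2 = [Ld, Lb]" "lw R3 = [Lc, Lb]" "lw R4 = [Ld, La]"
  "lw R5 = [Dl, Dli]" "lw R6 = [Dli, Dl]" "lw R7 = [Lb, Dli, Lc]" "lw R8 = [Ld, Dli, La]"
  "lw R9 = [Lb, Dli, La]" "lw R10 = [Ld, Dli, Lc]"
  by (simp_all add: lw_def Rdefs)

lemma lc_R: "lc R1 = -1" "lc R2 = -1" "lc R3 = -1" "lc R4 = 1" "lc R5 = 1" "lc R6 = 1"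
  "lc R7 = -1" "lc R8 = 1" "lc R9 = 1" "lc R10 = -1"
  by (simp_all add: lc_def lw_R) (simp_all add: lincomb_def Rdefs)

lemma lc_nz: "r \<in> rels \<Longrightarrow> lc r \<noteq> 0"
  by (auto simp: rels_eq lc_R)

lemma lw_lt: "r \<in> rels \<Longrightarrow> (e, x) \<in> set r \<Longrightarrow> x \<noteq> lw r \<Longrightarrow> val x < val (lw r)"
  by (auto simp: rels_eq lw_R) (auto simp: Rdefs)

lemma lw_le: "r \<in> rels \<Longrightarrow> (e, x) \<in> set r \<Longrightarrow> val x \<le> val (lw r)"
  using lw_lt by fastforce

lemma lw_prefix: "r1 \<in> rels \<Longrightarrow> r2 \<in> rels \<Longrightarrow> lw r1 @ v1 = lw r2 @ v2 \<Longrightarrow> r1 = r2"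
  by (auto simp: rels_eq lw_R)

lemma lw_noincl: "r1 \<in> rels \<Longrightarrow> r2 \<in> rels \<Longrightarrow> lw r1 = m @ lw r2 @ s \<Longrightarrow> m \<noteq> [] \<Longrightarrow> False"
  by (auto simp: rels_eq lw_R Cons_eq_append_conv append_eq_Cons_conv)



definition bad2 :: "gen \<Rightarrow> gen \<Rightarrow> bool" where
  "bad2 x y \<longleftrightarrow> ((x = Lc \<or> x = Ld) \<and> (y = La \<or> y = Lb)) \<or> (x = Dl \<and> y = Dli) \<or> (x = Dli \<and> y = Dl)"
definition bad3 :: "gen \<Rightarrow> gen \<Rightarrow> gen \<Rightarrow> bool" where
  "bad3 x y z \<longleftrightarrow> (x = Lb \<or> x = Ld) \<and> y = Dli \<and> (z = La \<or> z = Lc)"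

fun irr :: "word \<Rightarrow> bool" where
  "irr (x # y # z # r) = (\<not> bad2 x y \<and> \<not> bad3 x y z \<and> irr (y # z # r))"
| "irr [x, y] = (\<not> bad2 x y)"
| "irr [x] = True"
| "irr [] = True"

lemma irr_Cons: "irr (x # w) \<longleftrightarrow> irr w \<and> (case w of [] \<Rightarrow> True | y # r \<Rightarrow> \<not> bad2 x y \<and>
    (case r of [] \<Rightarrow> True | z # _ \<Rightarrow> \<not> bad3 x y z))"
proof (cases w)
  case (Cons y r)
  then show ?thesis by (cases r) auto
qed simp

lemma irr_not_lw: "irr w \<Longrightarrow> r \<in> rels \<Longrightarrow> w = u @ lw r @ v \<Longrightarrow> False"
proof (induction u arbitrary: w)
  case Nil
  then show ?case by (auto simp: rels_eq lw_R irr_Cons bad2_def bad3_def)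
next
  case (Cons x u)
  then show ?case by (auto simp: irr_Cons)
qed

lemma bad2_rel: "bad2 x y \<Longrightarrow> \<exists>r\<in>(rels :: ('k::field \<times> word) list set). lw r = [x, y]"
  by (auto simp: bad2_def rels_eq lw_R)

lemma bad3_rel: "bad3 x y z \<Longrightarrow> \<exists>r\<in>(rels :: ('k::field \<times> word) list set). lw r = [x, y, z]"
  by (auto simp: bad3_def rels_eq lw_R)

lemma not_irr_lw: "\<not> irr w \<Longrightarrow> \<exists>u (r :: ('k::field \<times> word) list) v. r \<in> rels \<and> w = u @ lw r @ v"
proof (induction w)
  case Nil
  then show ?case by simp
next
  case (Cons x w)
  show ?case
  proof (cases "irr w")
    case False
    then obtain u r v where "r \<in> (rels :: ('k \<times> word) list set)" "w = u @ lw r @ v" using Cons.IH by blast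
    then show ?thesis by (intro exI[of _ "x # u"] exI[of _ r] exI[of _ v]) auto
  next
    case True
    then obtain y r where w: "w = y # r" and h: "bad2 x y \<or> (case r of [] \<Rightarrow> False | z # _ \<Rightarrow> bad3 x y z)"
      using Cons.prems by (auto simp: irr_Cons split: list.splits)
    show ?thesis
    proof (cases "bad2 x y")
      case True
      then obtain rr where "rr \<in> (rels :: ('k \<times> word) list set)" "lw rr = [x, y]" using bad2_rel by blast
      then show ?thesis using w by (intro exI[of _ "[]"] exI[of _ rr] exI[of _ r]) auto
    next
      case False
      then obtain z r' where r: "r = z # r'" and "bad3 x y z" using h by (auto split: list.splits)
      then obtain rr where "rr \<in> (rels :: ('k \<times> word) list set)" "lw rr = [x, y, z]" using bad3_rel by blast
      then show ?thesis using w r by (intro exI[of _ "[]"] exI[of _ rr] exI[of _ r']) auto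
    qed
  qed
qed

section \<open>Normal words\<close>

lemma nf_word_Nil: "nf_word x0 [] = delpow x0" by (simp add: nf_word_def)
lemma nf_word_Cons: "nf_word x0 ((w, x) # ps) = delpow x0 @ w @ nf_word x ps"
  by (simp add: nf_word_def)

lemma nf_data_Nil: "nf_data []" by (simp add: nf_data_def)

lemma nf_data_Cons: "nf_data ((w, x) # ps) \<longleftrightarrow> good_word w \<and> nf_data ps \<and>
   (ps \<noteq> [] \<longrightarrow> x \<noteq> 0 \<and> (x = -1 \<longrightarrow> col (last w) \<le> col (hd (fst (hd ps)))))"
proof -
  have a: "(\<forall>j < length ((w, x) # ps). good_word (fst (((w, x) # ps) ! j))) \<longleftrightarrow>
      good_word w \<and> (\<forall>j < length ps. good_word (fst (ps ! j)))"
    by (auto simp: All_less_Suc2)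
  have b: "(\<forall>j. Suc j < length ((w, x) # ps) \<longrightarrow> P (((w, x) # ps) ! j) (((w, x) # ps) ! Suc j)) \<longleftrightarrow>
      (ps \<noteq> [] \<longrightarrow> P (w, x) (hd ps)) \<and> (\<forall>j. Suc j < length ps \<longrightarrow> P (ps ! j) (ps ! Suc j))" for P
  proof
    assume h: "\<forall>j. Suc j < length ((w, x) # ps) \<longrightarrow> P (((w, x) # ps) ! j) (((w, x) # ps) ! Suc j)"
    show "(ps \<noteq> [] \<longrightarrow> P (w, x) (hd ps)) \<and> (\<forall>j. Suc j < length ps \<longrightarrow> P (ps ! j) (ps ! Suc j))"
    proof (intro conjI impI allI)
      assume "ps \<noteq> []" then show "P (w, x) (hd ps)" using h[rule_format, of 0] by (cases ps) auto
    next
      fix j assume "Suc j < length ps" then show "P (ps ! j) (ps ! Suc j)" using h[rule_format, of "Suc j"] by auto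
    qed
  next
    assume h: "(ps \<noteq> [] \<longrightarrow> P (w, x) (hd ps)) \<and> (\<forall>j. Suc j < length ps \<longrightarrow> P (ps ! j) (ps ! Suc j))"
    show "\<forall>j. Suc j < length ((w, x) # ps) \<longrightarrow> P (((w, x) # ps) ! j) (((w, x) # ps) ! Suc j)"
    proof (intro allI impI)
      fix j assume j: "Suc j < length ((w, x) # ps)"
      show "P (((w, x) # ps) ! j) (((w, x) # ps) ! Suc j)"
      proof (cases j)
        case 0 then show ?thesis using h j by (cases ps) auto
      next
        case (Suc i) then show ?thesis using h j by auto
      qed
    qed
  qed
  show ?thesis unfolding nf_data_def a
    by (subst b[where P = "\<lambda>p q. snd p \<noteq> 0 \<and> (snd p = -1 \<longrightarrow> col (last (fst p)) \<le> col (hd (fst q)))"]) auto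
qed

definition letter :: "gen \<Rightarrow> bool" where "letter g \<longleftrightarrow> g \<in> {La, Lb, Lc, Ld}"

lemma good_word_single: "good_word [g] \<longleftrightarrow> letter g"
  by (auto simp: good_word_def letter_def)

lemma good_word_Cons: "w \<noteq> [] \<Longrightarrow> good_word (g # w) \<longleftrightarrow> letter g \<and> good_word w \<and> row g \<le> row (hd w)"
proof -
  assume "w \<noteq> []"
  then obtain h w' where w: "w = h # w'" by (cases w) auto
  have "(\<forall>i. Suc i < length (g # w) \<longrightarrow> row ((g # w) ! i) \<le> row ((g # w) ! Suc i)) \<longleftrightarrow>
        row g \<le> row h \<and> (\<forall>i. Suc i < length w \<longrightarrow> row (w ! i) \<le> row (w ! Suc i))"
    using w by (auto simp: nth_Cons split: nat.splits)
  then show ?thesis using w by (auto simp: good_word_def letter_def)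
qed

lemma good_word_hd: "good_word w \<Longrightarrow> w \<noteq> [] \<and> letter (hd w)"
  by (cases w) (auto simp: good_word_def letter_def)

lemma good_word_last: "good_word w \<Longrightarrow> letter (last w)"
  unfolding good_word_def letter_def using last_in_set by blast

lemma delpow_pos: "x > 0 \<Longrightarrow> delpow x = Dl # delpow (x - 1)"
proof -
  assume x: "x > 0"
  have n: "nat x = Suc (nat (x - 1))" using x by arith
  show ?thesis using x n by (simp add: delpow_def)
qed
lemma delpow_neg: "x < 0 \<Longrightarrow> delpow x = Dli # delpow (x + 1)"
proof -
  assume x: "x < 0"
  have n: "nat (- x) = Suc (nat (- (x + 1)))" using x by arith
  show ?thesis
  proof (cases "x = -1")
    case True then show ?thesis by (simp add: delpow_def)
  next
    case False then have "\<not> 0 \<le> x + 1" using x by arith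
    then show ?thesis using x n by (simp add: delpow_def)
  qed
qed
lemma delpow_0: "delpow 0 = []" by (simp add: delpow_def)

lemma irr_to_nf: "irr w \<Longrightarrow> \<exists>x0 ps. w = nf_word x0 ps \<and> nf_data ps"
proof (induction w)
  case Nil
  then show ?case by (intro exI[of _ 0] exI[of _ "[]"]) (simp add: nf_word_Nil delpow_0 nf_data_Nil)
next
  case (Cons g w)
  then have "irr w" by (simp add: irr_Cons)
  then obtain y0 qs where w: "w = nf_word y0 qs" and qs: "nf_data qs" using Cons.IH by blast
  consider "g = Dl" | "g = Dli" | "letter g" by (cases g) (auto simp: letter_def)
  then show ?case
  proof cases
    case 1
    show ?thesis
    proof (cases "y0 < 0")
      case True
      then have "w = Dli # delpow (y0 + 1) @ concat (map (\<lambda>(w, x). w @ delpow x) qs)"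
        using w by (simp add: nf_word_def delpow_neg)
      then show ?thesis using Cons.prems 1 by (simp add: bad2_def irr_Cons)
    next
      case False
      have "g # w = nf_word (y0 + 1) qs" using w 1 False
        by (simp add: nf_word_def delpow_pos)
      then show ?thesis using qs by blast
    qed
  next
    case 2
    show ?thesis
    proof (cases "y0 > 0")
      case True
      then have "w = Dl # delpow (y0 - 1) @ concat (map (\<lambda>(w, x). w @ delpow x) qs)"
        using w by (simp add: nf_word_def delpow_pos)
      then show ?thesis using Cons.prems 2 by (simp add: bad2_def irr_Cons)
    next
      case False
      have "g # w = nf_word (y0 - 1) qs" using w 2 False
        by (simp add: nf_word_def delpow_neg)
      then show ?thesis using qs by blast
    qed
  next
    case 3
    show ?thesis
    proof (cases "y0 = 0")
      case True
      show ?thesis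
      proof (cases qs)
        case Nil
        then have "g # w = nf_word 0 [([g], 0)]" using w True by (simp add: nf_word_def delpow_0)
        moreover have "nf_data [([g], 0)]" using 3 by (simp add: nf_data_Cons nf_data_Nil good_word_single)
        ultimately show ?thesis by blast
      next
        case (Cons p qs')
        obtain w1 x1 where p: "p = (w1, x1)" by (cases p)
        have d: "good_word w1 \<and> nf_data qs' \<and>
           (qs' \<noteq> [] \<longrightarrow> x1 \<noteq> 0 \<and> (x1 = -1 \<longrightarrow> col (last w1) \<le> col (hd (fst (hd qs')))))"
          using qs Cons p by (simp add: nf_data_Cons)
        then obtain h w1' where w1: "w1 = h # w1'" "letter h" using good_word_hd by (cases w1) force+
        have ww: "w = w1 @ nf_word x1 qs'" using w True Cons p by (simp add: nf_word_Cons delpow_0)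
        have "\<not> bad2 g h" using Cons.prems ww w1 by (simp add: irr_Cons)
        then have "row g \<le> row h" using 3 w1(2) by (auto simp: letter_def bad2_def)
        then have "good_word (g # w1)" using d 3 w1 by (simp add: good_word_Cons)
        moreover have "g # w = nf_word 0 ((g # w1, x1) # qs')" using ww by (simp add: nf_word_Cons delpow_0)
        ultimately show ?thesis using d w1 by (intro exI[of _ 0] exI[of _ "(g # w1, x1) # qs'"]) (simp add: nf_data_Cons)
      qed
    next
      case False
      have e: "g # w = nf_word 0 (([g], y0) # qs)" using w by (simp add: nf_word_Cons delpow_0)
      have "nf_data (([g], y0) # qs)"
      proof -
        have "col g \<le> col (hd (fst (hd qs)))" if ne: "qs \<noteq> []" and m1: "y0 = -1"
        proof -
          obtain w1 x1 qs' where qq: "qs = (w1, x1) # qs'" using ne by (metis list.exhaust prod.exhaust)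
          then have "good_word w1" using qs by (simp add: nf_data_Cons)
          then obtain h w1' where w1: "w1 = h # w1'" "letter h" using good_word_hd by (cases w1) force+
          have "w = Dli # h # w1' @ nf_word x1 qs'" using w qq w1 m1 by (simp add: nf_word_Cons delpow_neg delpow_0)
          then have "\<not> bad3 g Dli h" using Cons.prems by (simp add: irr_Cons)
          then show ?thesis using 3 w1 qq by (auto simp: letter_def bad3_def)
        qed
        then show ?thesis using False qs 3 by (simp add: nf_data_Cons good_word_single)
      qed
      then show ?thesis using e by blast
    qed
  qed
qed



lemma irr_rep: "g = Dl \<or> g = Dli \<Longrightarrow> irr ys \<Longrightarrow> (ys = [] \<or> letter (hd ys)) \<Longrightarrow> irr (replicate n g @ ys)"
proof (induction n)
  case (Suc n)
  have h: "y = g \<or> letter y" if "replicate n g @ ys = y # r" for y r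
    using that Suc.prems by (cases n) auto
  have i: "irr (replicate n g @ ys)" using Suc by simp
  show ?case
  proof (cases "replicate n g @ ys")
    case Nil then show ?thesis by simp
  next
    case (Cons y r)
    then have "\<not> bad2 g y" using h Suc.prems(1) by (auto simp: bad2_def letter_def)
    moreover have "\<not> bad3 g y z" for z using Suc.prems(1) by (auto simp: bad3_def)
    ultimately show ?thesis using i Cons by (simp add: irr_Cons split: list.splits)
  qed
qed simp

lemma irr_delpow_app: "irr ys \<Longrightarrow> (ys = [] \<or> letter (hd ys)) \<Longrightarrow> irr (delpow x @ ys)"
  unfolding delpow_def using irr_rep by auto

lemma irr_good_app: "good_word w \<Longrightarrow> irr (last w # zs) \<Longrightarrow> irr zs \<Longrightarrow> irr (w @ zs)"
proof (induction w)
  case (Cons g w')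
  show ?case
  proof (cases "w' = []")
    case True then show ?thesis using Cons by simp
  next
    case False
    then have gw: "letter g" "good_word w'" "row g \<le> row (hd w')" using Cons.prems good_word_Cons by auto
    then have "irr (w' @ zs)" using Cons False by simp
    moreover obtain h r where hr: "w' = h # r" using False by (cases w') auto
    moreover have "letter h" using good_word_hd[OF gw(2)] hr by simp
    moreover have "\<not> bad2 g h" using gw hr \<open>letter h\<close> by (auto simp: bad2_def letter_def)
    moreover have "\<not> bad3 g h z" for z using \<open>letter h\<close> by (auto simp: bad3_def letter_def)
    ultimately show ?thesis by (simp add: irr_Cons split: list.splits)
  qed
qed simp

lemma irr_letter_nf:
  assumes l: "letter l" and d: "nf_data ps" and i: "irr (nf_word x ps)"
    and c: "ps \<noteq> [] \<longrightarrow> x \<noteq> 0 \<and> (x = -1 \<longrightarrow> col l \<le> col (hd (fst (hd ps))))"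
  shows "irr (l # nf_word x ps)"
proof -
  have lc: "\<not> bad2 l Dl" "\<not> bad2 l Dli" using l by (auto simp: bad2_def letter_def)
  have hd_ok: "\<not> bad3 l Dli z" if "z = Dli \<or> (x = -1 \<and> ps \<noteq> [] \<and> z = hd (fst (hd ps)))" for z
  proof -
    { assume a: "x = -1" "ps \<noteq> []" "z = hd (fst (hd ps))"
      obtain w2 x2 ps' where "ps = (w2, x2) # ps'" using a by (metis list.exhaust prod.exhaust)
      then have "letter z" using d a good_word_hd by (auto simp: nf_data_Cons)
      then have ?thesis using c a l by (auto simp: bad3_def letter_def) }
    then show ?thesis using that by (auto simp: bad3_def)
  qed
  show ?thesis
  proof (cases "x < 0")
    case False
    show ?thesis
    proof (cases "x = 0")
      case True
      then show ?thesis using i d l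
      proof (cases ps)
        case (Cons p ps')
        obtain w2 x2 where p: "p = (w2, x2)" by (cases p)
        have "good_word w2" using d Cons p by (simp add: nf_data_Cons)
        then obtain h r where "w2 = h # r" "letter h" using good_word_hd by (cases w2) force+
        then show ?thesis using True Cons p l i c by (simp add: nf_word_Cons delpow_0)
      qed (simp add: nf_word_Nil delpow_0)
    next
      case False
      then have e: "nf_word x ps = Dl # nf_word (x - 1) ps" using \<open>\<not> x < 0\<close> by (simp add: nf_word_def delpow_pos)
      show ?thesis using i lc unfolding e by (auto simp: irr_Cons bad3_def split: list.splits)
    qed
  next
    case True
    have e: "nf_word x ps = Dli # nf_word (x + 1) ps" using True by (simp add: nf_word_def delpow_neg)
    have "case nf_word (x + 1) ps of [] \<Rightarrow> True | z # _ \<Rightarrow> \<not> bad3 l Dli z"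
    proof (cases "x = -1")
      case True
      show ?thesis
      proof (cases ps)
        case Nil then show ?thesis using True by (simp add: nf_word_def delpow_0)
      next
        case (Cons p ps')
        obtain w2 x2 where p: "p = (w2, x2)" by (cases p)
        have "good_word w2" using d Cons p by (simp add: nf_data_Cons)
        then obtain h r where "w2 = h # r" by (cases w2) (auto simp: good_word_def)
        then show ?thesis using True Cons p hd_ok by (simp add: nf_word_Cons delpow_0)
      qed
    next
      case False
      then have "x + 1 < 0" using True by simp
      then show ?thesis using hd_ok by (simp add: nf_word_def delpow_neg)
    qed
    then show ?thesis using i lc e by (auto simp: irr_Cons split: list.splits)
  qed
qed

lemma nf_irr: "nf_data ps \<Longrightarrow> irr (nf_word x0 ps)"
proof (induction ps arbitrary: x0)
  case Nil
  then show ?case using irr_delpow_app[of "[]"] by (simp add: nf_word_Nil)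
next
  case (Cons p ps)
  obtain w x where p: "p = (w, x)" by (cases p)
  have d: "good_word w" "nf_data ps"
    "ps \<noteq> [] \<longrightarrow> x \<noteq> 0 \<and> (x = -1 \<longrightarrow> col (last w) \<le> col (hd (fst (hd ps))))"
    using Cons.prems p by (auto simp: nf_data_Cons)
  have i: "irr (nf_word x ps)" using Cons.IH d by simp
  have "irr (last w # nf_word x ps)" using irr_letter_nf[OF good_word_last[OF d(1)] d(2) i d(3)] .
  then have "irr (w @ nf_word x ps)" using irr_good_app d(1) i by blast
  moreover have "letter (hd (w @ nf_word x ps))" using good_word_hd[OF d(1)] by simp
  ultimately show ?case using p irr_delpow_app by (simp add: nf_word_Cons)
qed

lemma normal_words_eq: "normal_words = {w. irr w}"
  unfolding normal_words_def using nf_irr irr_to_nf by blast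



type_synonym 'k trm = "'k \<times> word \<times> ('k \<times> word) list \<times> word"

lemma lincomb_Nil: "lincomb [] w = 0" by (simp add: lincomb_def)
lemma lincomb_Cons: "lincomb ((c, x) # ps) w = (if x = w then c else 0) + lincomb ps w"
  by (simp add: lincomb_def)
lemma lincomb_append: "lincomb (ps @ qs) w = lincomb ps w + lincomb qs w"
  by (simp add: lincomb_def)

lemma lincomb_sandw: "lincomb (sandw u r v) w = (\<Sum>(e, x)\<leftarrow>r. if u @ x @ v = w then e else 0)"
  by (induction r) (auto simp: lincomb_def sandw_def)

lemma lincomb_sandw_shift:
  "lincomb (sandw (u @ u') r (v' @ v)) (u @ x @ v) = lincomb (sandw u' r v') x"
  unfolding lincomb_sandw by (rule arg_cong[where f = sum_list]) auto

lemma lincomb_sandw_at: "lincomb (sandw u r v) (u @ x @ v) = lincomb r x"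
  using lincomb_sandw_shift[of u "[]" r "[]" v x] by (simp add: sandw_def)

lemma lincomb_sandw_nz: "lincomb (sandw u r v) w \<noteq> 0 \<Longrightarrow> \<exists>e x. (e, x) \<in> set r \<and> w = u @ x @ v"
proof (induction r)
  case Nil then show ?case by (simp add: lincomb_def sandw_def)
next
  case (Cons p r)
  obtain e x where p: "p = (e, x)" by (cases p)
  show ?case using Cons p by (auto simp: lincomb_sandw split: if_splits)
qed

lemma lincomb_sandw_off: "\<not> (\<exists>x. w = u @ x @ v) \<Longrightarrow> lincomb (sandw u r v) w = 0"
  using lincomb_sandw_nz by blast

definition tm :: "'k::field trm \<Rightarrow> word \<Rightarrow> 'k" where
  "tm t w = (case t of (c, u, r, v) \<Rightarrow> c * lincomb (sandw u r v) w)"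

definition FT :: "'k::field trm list \<Rightarrow> word \<Rightarrow> 'k" where
  "FT T w = (\<Sum>t\<leftarrow>T. tm t w)"

definition valid :: "'k::field trm list \<Rightarrow> bool" where
  "valid T \<longleftrightarrow> (\<forall>t\<in>set T. fst (snd (snd t)) \<in> rels)"

definition key :: "'k trm \<Rightarrow> nat" where
  "key t = (case t of (c, u, r, v) \<Rightarrow> val (u @ lw r @ v))"

definition lower :: "nat \<Rightarrow> (word \<Rightarrow> 'k::field) \<Rightarrow> bool" where
  "lower N f \<longleftrightarrow> (\<exists>T. valid T \<and> (\<forall>t\<in>set T. key t < N) \<and> f = FT T)"

definition scaleT :: "'k::field \<Rightarrow> 'k trm list \<Rightarrow> 'k trm list" where
  "scaleT a T = map (\<lambda>(c, u, r, v). (a * c, u, r, v)) T"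

lemma FT_Nil: "FT [] = (\<lambda>_. 0)" by (simp add: FT_def fun_eq_iff)
lemma FT_Cons: "FT (t # T) w = tm t w + FT T w" by (simp add: FT_def)
lemma FT_append: "FT (A @ B) w = FT A w + FT B w" by (simp add: FT_def)
lemma FT_scaleT: "FT (scaleT a T) w = a * FT T w"
  by (induction T) (auto simp: FT_def scaleT_def tm_def algebra_simps)
lemma valid_append: "valid (A @ B) \<longleftrightarrow> valid A \<and> valid B" by (auto simp: valid_def)
lemma valid_scaleT: "valid (scaleT a T) \<longleftrightarrow> valid T" by (auto simp: valid_def scaleT_def)
lemma key_scale1: "key (case t of (c, x) \<Rightarrow> (a * c, x)) = key t"
  by (cases t) (simp add: key_def)
lemma key_scaleT: "(\<forall>t\<in>set (scaleT a T). key t < N) \<longleftrightarrow> (\<forall>t\<in>set T. key t < N)"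
  by (simp add: scaleT_def key_scale1)

lemma FT_filter: "FT T w = FT (filter P T) w + FT (filter (\<lambda>t. \<not> P t) T) w"
  by (induction T) (auto simp: FT_def)

lemma lower_0: "lower N (\<lambda>_. 0)"
  unfolding lower_def by (intro exI[of _ "[]"]) (simp add: valid_def FT_Nil)

lemma lower_lin: "lower N f \<Longrightarrow> lower N g \<Longrightarrow> lower N (\<lambda>w. a * f w + b * g w)"
proof -
  assume "lower N f" "lower N g"
  then obtain T1 T2 where 1: "valid T1" "\<forall>t\<in>set T1. key t < N" "f = FT T1"
    and 2: "valid T2" "\<forall>t\<in>set T2. key t < N" "g = FT T2" unfolding lower_def by blast
  show ?thesis unfolding lower_def
    apply (intro exI[of _ "scaleT a T1 @ scaleT b T2"])
    using 1 2 by (simp add: valid_append valid_scaleT FT_append FT_scaleT fun_eq_iff key_scaleT ball_Un)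
qed

lemma lower_cong: "lower N f \<Longrightarrow> (\<And>w. f w = g w) \<Longrightarrow> lower N g"
proof -
  assume "lower N f" "\<And>w. f w = g w"
  then have "f = g" by auto
  then show ?thesis using \<open>lower N f\<close> by simp
qed

lemma ideal_FT: "valid T \<Longrightarrow> FT T \<in> rel_ideal"
proof (induction T)
  case Nil
  then show ?case using rel_ideal.zero by (simp add: FT_Nil)
next
  case (Cons t T)
  obtain c u r v where t: "t = (c, u, r, v)" by (cases t)
  have "valid T" "r \<in> rels" using Cons.prems t by (auto simp: valid_def)
  then have "(\<lambda>w. FT T w + c * lincomb (sandw u r v) w) \<in> rel_ideal"
    using Cons.IH rel_ideal.step by blast
  moreover have "FT (t # T) = (\<lambda>w. FT T w + c * lincomb (sandw u r v) w)"
    by (simp add: fun_eq_iff FT_Cons t tm_def)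
  ultimately show ?case by simp
qed

lemma FT_ideal: "f \<in> rel_ideal \<Longrightarrow> \<exists>T. valid T \<and> f = FT T"
proof (induction rule: rel_ideal.induct)
  case zero
  then show ?case by (intro exI[of _ "[]"]) (simp add: valid_def FT_Nil)
next
  case (step f r c u v)
  then obtain T where "valid T" "f = FT T" by blast
  then show ?case using step
    by (intro exI[of _ "(c, u, r, v) # T"]) (auto simp: valid_def fun_eq_iff FT_Cons tm_def)
qed

lemma tm_supp: "r \<in> rels \<Longrightarrow> tm (c, u, r, v) w \<noteq> 0 \<Longrightarrow>
   val w \<le> key (c, u, r, v) \<and> (val w = key (c, u, r, v) \<longrightarrow> w = u @ lw r @ v)"
proof -
  assume r: "r \<in> rels" and nz: "tm (c, u, r, v) w \<noteq> 0"
  then have "lincomb (sandw u r v) w \<noteq> 0" by (auto simp: tm_def)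
  then obtain e x where ex: "(e, x) \<in> set r" "w = u @ x @ v" using lincomb_sandw_nz by blast
  have "val x \<le> val (lw r)" using lw_le[OF r ex(1)] .
  then have "val w \<le> key (c, u, r, v)" using ex val_mono by (simp add: key_def)
  moreover have "val w = key (c, u, r, v) \<longrightarrow> w = u @ lw r @ v"
    using ex by (auto simp: key_def dest: val_inj)
  ultimately show ?thesis by blast
qed

lemma tm_at_key: "tm (c, u, r, v) (u @ lw r @ v) = c * lc r"
  by (simp add: tm_def lincomb_sandw_at lc_def)

definition swt :: "word \<Rightarrow> word \<Rightarrow> 'k trm \<Rightarrow> 'k trm" where
  "swt u v t = (case t of (c, u', r, v') \<Rightarrow> (c, u @ u', r, v' @ v))"

lemma tm_swt_at: "tm (swt u v t) (u @ x @ v) = tm t x"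
  by (cases t) (simp add: swt_def tm_def lincomb_sandw_shift)

lemma tm_swt_off: "\<not> (\<exists>x. w = u @ x @ v) \<Longrightarrow> tm (swt u v t) w = 0"
proof -
  assume a: "\<not> (\<exists>x. w = u @ x @ v)"
  obtain c u' r v' where t: "t = (c, u', r, v')" by (cases t)
  have 1: "\<not> (\<exists>x. w = (u @ u') @ x @ (v' @ v))" using a by (metis append.assoc)
  have "lincomb (sandw (u @ u') r (v' @ v)) w = 0" using lincomb_sandw_off[of w "u @ u'" "v' @ v" r] 1 by blast
  then show ?thesis using t by (simp add: swt_def tm_def)
qed

lemma FT_swt_at: "FT (map (swt u v) T) (u @ x @ v) = FT T x"
  by (simp add: FT_def o_def tm_swt_at)
lemma FT_swt_off: "\<not> (\<exists>x. w = u @ x @ v) \<Longrightarrow> FT (map (swt u v) T) w = 0"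
  by (simp add: FT_def o_def tm_swt_off)

lemma lower_sandwich:
  assumes l: "lower (val W0) (\<lambda>w. lincomb (sandw u1 r1 v1) w - k * lincomb (sandw u2 r2 v2) w)"
  shows "lower (val (u @ W0 @ v)) (\<lambda>w. lincomb (sandw (u @ u1) r1 (v1 @ v)) w - k * lincomb (sandw (u @ u2) r2 (v2 @ v)) w)"
proof -
  obtain T where T: "valid T" "\<forall>t\<in>set T. key t < val W0"
    "(\<lambda>w. lincomb (sandw u1 r1 v1) w - k * lincomb (sandw u2 r2 v2) w) = FT T"
    using l unfolding lower_def by blast
  show ?thesis unfolding lower_def
  proof (intro exI[of _ "map (swt u v) T"] conjI)
    show "valid (map (swt u v) T)" using T(1) by (auto simp: valid_def swt_def split: prod.splits)
    show "\<forall>t\<in>set (map (swt u v) T). key t < val (u @ W0 @ v)"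
    proof
      fix t assume "t \<in> set (map (swt u v) T)"
      then obtain t' where t': "t' \<in> set T" "t = swt u v t'" by auto
      obtain c u' r v' where tt: "t' = (c, u', r, v')" by (cases t')
      have "val (u' @ lw r @ v') < val W0" using T(2) t' tt by (auto simp: key_def)
      then have "val (u @ (u' @ lw r @ v') @ v) < val (u @ W0 @ v)" by (rule val_mono_strict)
      then show "key t < val (u @ W0 @ v)" using t' tt by (simp add: swt_def key_def)
    qed
    show "(\<lambda>w. lincomb (sandw (u @ u1) r1 (v1 @ v)) w - k * lincomb (sandw (u @ u2) r2 (v2 @ v)) w) =
        FT (map (swt u v) T)"
    proof
      fix w
      show "lincomb (sandw (u @ u1) r1 (v1 @ v)) w - k * lincomb (sandw (u @ u2) r2 (v2 @ v)) w =
          FT (map (swt u v) T) w"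
      proof (cases "\<exists>x. w = u @ x @ v")
        case True
        then obtain x where x: "w = u @ x @ v" by blast
        have "FT T x = lincomb (sandw u1 r1 v1) x - k * lincomb (sandw u2 r2 v2) x"
          using fun_cong[OF T(3), of x] by simp
        then show ?thesis using x by (simp add: FT_swt_at lincomb_sandw_shift)
      next
        case False
        have "\<not> (\<exists>x. w = (u @ u1) @ x @ (v1 @ v))" "\<not> (\<exists>x. w = (u @ u2) @ x @ (v2 @ v))"
          using False by (metis append.assoc)+
        then have "lincomb (sandw (u @ u1) r1 (v1 @ v)) w = 0" "lincomb (sandw (u @ u2) r2 (v2 @ v)) w = 0"
          using lincomb_sandw_off by blast+
        then show ?thesis using False by (simp add: FT_swt_off)
      qed
    qed
  qed
qed

lemma sum_list_swap:
  "(\<Sum>a\<leftarrow>xs. \<Sum>b\<leftarrow>ys. f a b) = (\<Sum>b\<leftarrow>ys. \<Sum>a\<leftarrow>xs. f a b)"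
  for f :: "'a \<Rightarrow> 'b \<Rightarrow> 'c::comm_monoid_add"
proof (induction xs)
  case (Cons x xs)
  have "(\<Sum>a\<leftarrow>x # xs. \<Sum>b\<leftarrow>ys. f a b) = (\<Sum>b\<leftarrow>ys. f x b) + (\<Sum>b\<leftarrow>ys. \<Sum>a\<leftarrow>xs. f a b)"
    using Cons by simp
  also have "\<dots> = (\<Sum>b\<leftarrow>ys. f x b + (\<Sum>a\<leftarrow>xs. f a b))" by (simp add: sum_list_addf)
  finally show ?case by simp
qed simp

lemma sum_split_lead:
  "(\<Sum>(e, y)\<leftarrow>r. e * G y) = lincomb r l * G l + (\<Sum>(e, y)\<leftarrow>filter (\<lambda>(e, y). y \<noteq> l) r. e * G y)"
  for G :: "word \<Rightarrow> 'k::field"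
  by (induction r) (auto simp: lincomb_def algebra_simps)



lemma FT_expand: "FT T = lincomb (concat (map (\<lambda>(c, u, r, v). map (\<lambda>(e, x). (c * e, u @ x @ v)) r) T))"
proof
  fix w
  show "FT T w = lincomb (concat (map (\<lambda>(c, u, r, v). map (\<lambda>(e, x). (c * e, u @ x @ v)) r) T)) w"
  proof (induction T)
    case Nil then show ?case by (simp add: FT_def lincomb_def)
  next
    case (Cons t T)
    obtain c u r v where t: "t = (c, u, r, v)" by (cases t)
    have "lincomb (map (\<lambda>(e, x). (c * e, u @ x @ v)) r) w = c * lincomb (sandw u r v) w"
      by (induction r) (auto simp: lincomb_def sandw_def algebra_simps)
    then show ?case using Cons t by (simp add: FT_Cons lincomb_append tm_def)
  qed
qed

lemma lincomb_notin: "x \<notin> set (map snd L) \<Longrightarrow> lincomb L x = 0"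
  by (induction L) (auto simp: lincomb_def)

lemma lincomb_eqI: "(\<forall>x\<in>set (map snd (L1 @ L2)). lincomb L1 x = lincomb L2 x) \<Longrightarrow> lincomb L1 = lincomb L2"
proof
  fix x assume a: "\<forall>x\<in>set (map snd (L1 @ L2)). lincomb L1 x = lincomb L2 x"
  show "lincomb L1 x = lincomb L2 x"
  proof (cases "x \<in> set (map snd (L1 @ L2))")
    case True then show ?thesis using a by blast
  next
    case False then show ?thesis using lincomb_notin[of x L1] lincomb_notin[of x L2] by auto
  qed
qed

lemma lincomb_diff: "(\<lambda>w. lincomb A w - k * lincomb B w) = lincomb (A @ map (\<lambda>(e, x). (- k * e, x)) B)"
proof
  fix w
  have "lincomb (map (\<lambda>(e, x). (- k * e, x)) B) w = - k * lincomb B w"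
    by (induction B) (auto simp: lincomb_def algebra_simps)
  then show "lincomb A w - k * lincomb B w = lincomb (A @ map (\<lambda>(e, x). (- k * e, x)) B) w"
    by (simp add: lincomb_append)
qed

lemma certI: "valid T \<Longrightarrow> (\<forall>t\<in>set T. key t < N) \<Longrightarrow> FT T = f \<Longrightarrow> lower N f"
  unfolding lower_def by blast

lemma cert1: "lower (val (lw R2 @ [Dli,Lc]))
   (\<lambda>w. lincomb (sandw [] R2 [Dli,Lc]) w - (lc R2 / lc R7) * lincomb (sandw [Ld] R7 []) w :: 'k::field)"
  apply (rule certI[where T = "[((- 1), [], R4, [Dli,Ld]), ((- 1), [Lb], R10, []), ((- 1), [], R5, [Ld])] :: 'k trm list"])
    apply (simp add: valid_def rels_eq)
   apply (simp add: key_def lw_R)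
  apply (unfold FT_expand lincomb_diff)
  apply (rule lincomb_eqI)
  apply (simp only: lc_R)
  apply (simp add: Rdefs sandw_def lincomb_def)
  done

lemma cert2: "lower (val (lw R2 @ [Dli,La]))
   (\<lambda>w. lincomb (sandw [] R2 [Dli,La]) w - (lc R2 / lc R9) * lincomb (sandw [Ld] R9 []) w :: 'k::field)"
  apply (rule certI[where T = "[((- 1), [], R4, [Dli,Lb]), ((1), [Lb], R8, []), ((- 1), [], R5, [Lb])] :: 'k trm list"])
    apply (simp add: valid_def rels_eq)
   apply (simp add: key_def lw_R)
  apply (unfold FT_expand lincomb_diff)
  apply (rule lincomb_eqI)
  apply (simp only: lc_R)
  apply (simp add: Rdefs sandw_def lincomb_def)
  done

lemma cert3: "lower (val (lw R3 @ [Dli,Lc]))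
   (\<lambda>w. lincomb (sandw [] R3 [Dli,Lc]) w - (lc R3 / lc R7) * lincomb (sandw [Lc] R7 []) w :: 'k::field)"
  apply (rule certI[where T = "[((1), [], R1, [Dli,Ld]), ((- 1), [La], R10, []), ((- 1), [], R5, [Lc])] :: 'k trm list"])
    apply (simp add: valid_def rels_eq)
   apply (simp add: key_def lw_R)
  apply (unfold FT_expand lincomb_diff)
  apply (rule lincomb_eqI)
  apply (simp only: lc_R)
  apply (simp add: Rdefs sandw_def lincomb_def)
  done

lemma cert4: "lower (val (lw R3 @ [Dli,La]))
   (\<lambda>w. lincomb (sandw [] R3 [Dli,La]) w - (lc R3 / lc R9) * lincomb (sandw [Lc] R9 []) w :: 'k::field)"
  apply (rule certI[where T = "[((1), [], R1, [Dli,Lb]), ((1), [La], R8, []), ((- 1), [], R5, [La])] :: 'k trm list"])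
    apply (simp add: valid_def rels_eq)
   apply (simp add: key_def lw_R)
  apply (unfold FT_expand lincomb_diff)
  apply (rule lincomb_eqI)
  apply (simp only: lc_R)
  apply (simp add: Rdefs sandw_def lincomb_def)
  done

lemma cert5: "lower (val (lw R5 @ [Dl]))
   (\<lambda>w. lincomb (sandw [] R5 [Dl]) w - (lc R5 / lc R6) * lincomb (sandw [Dl] R6 []) w :: 'k::field)"
  apply (rule certI[where T = "[] :: 'k trm list"])
    apply (simp add: valid_def rels_eq)
   apply (simp add: key_def lw_R)
  apply (unfold FT_expand lincomb_diff)
  apply (rule lincomb_eqI)
  apply (simp only: lc_R)
  apply (simp add: Rdefs sandw_def lincomb_def)
  done

lemma cert6: "lower (val (lw R6 @ [Dli]))
   (\<lambda>w. lincomb (sandw [] R6 [Dli]) w - (lc R6 / lc R5) * lincomb (sandw [Dli] R5 []) w :: 'k::field)"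
  apply (rule certI[where T = "[] :: 'k trm list"])
    apply (simp add: valid_def rels_eq)
   apply (simp add: key_def lw_R)
  apply (unfold FT_expand lincomb_diff)
  apply (rule lincomb_eqI)
  apply (simp only: lc_R)
  apply (simp add: Rdefs sandw_def lincomb_def)
  done

lemma cert7: "lower (val (lw R7 @ [La]))
   (\<lambda>w. lincomb (sandw [] R7 [La]) w - (lc R7 / lc R1) * lincomb (sandw [Lb,Dli] R1 []) w :: 'k::field)"
  apply (rule certI[where T = "[((- 1), [], R9, [Lc]), ((1), [La,Dli], R4, []), ((1), [La], R6, [])] :: 'k trm list"])
    apply (simp add: valid_def rels_eq)
   apply (simp add: key_def lw_R)
  apply (unfold FT_expand lincomb_diff)
  apply (rule lincomb_eqI)
  apply (simp only: lc_R)
  apply (simp add: Rdefs sandw_def lincomb_def)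
  done

lemma cert8: "lower (val (lw R7 @ [Lb]))
   (\<lambda>w. lincomb (sandw [] R7 [Lb]) w - (lc R7 / lc R3) * lincomb (sandw [Lb,Dli] R3 []) w :: 'k::field)"
  apply (rule certI[where T = "[((- 1), [], R9, [Ld]), ((- 1), [La,Dli], R2, []), ((1), [Lb], R6, [])] :: 'k trm list"])
    apply (simp add: valid_def rels_eq)
   apply (simp add: key_def lw_R)
  apply (unfold FT_expand lincomb_diff)
  apply (rule lincomb_eqI)
  apply (simp only: lc_R)
  apply (simp add: Rdefs sandw_def lincomb_def)
  done

lemma cert9: "lower (val (lw R10 @ [La]))
   (\<lambda>w. lincomb (sandw [] R10 [La]) w - (lc R10 / lc R1) * lincomb (sandw [Ld,Dli] R1 []) w :: 'k::field)"
  apply (rule certI[where T = "[((- 1), [], R8, [Lc]), ((1), [Lc,Dli], R4, []), ((1), [Lc], R6, [])] :: 'k trm list"])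
    apply (simp add: valid_def rels_eq)
   apply (simp add: key_def lw_R)
  apply (unfold FT_expand lincomb_diff)
  apply (rule lincomb_eqI)
  apply (simp only: lc_R)
  apply (simp add: Rdefs sandw_def lincomb_def)
  done

lemma cert10: "lower (val (lw R10 @ [Lb]))
   (\<lambda>w. lincomb (sandw [] R10 [Lb]) w - (lc R10 / lc R3) * lincomb (sandw [Ld,Dli] R3 []) w :: 'k::field)"
  apply (rule certI[where T = "[((- 1), [], R8, [Ld]), ((- 1), [Lc,Dli], R2, []), ((1), [Ld], R6, [])] :: 'k trm list"])
    apply (simp add: valid_def rels_eq)
   apply (simp add: key_def lw_R)
  apply (unfold FT_expand lincomb_diff)
  apply (rule lincomb_eqI)
  apply (simp only: lc_R)
  apply (simp add: Rdefs sandw_def lincomb_def)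
  done



lemma ov_cases:
  assumes "lw r1 = m @ s" "lw r2 = s @ t" "m \<noteq> []" "s \<noteq> []" "t \<noteq> []"
  shows "\<exists>k. 0 < k \<and> k < length (lw r1) \<and> m = take k (lw r1) \<and>
     drop k (lw r1) = take (length (lw r1) - k) (lw r2) \<and> length (lw r1) - k < length (lw r2) \<and>
     t = drop (length (lw r1) - k) (lw r2)"
  using assms by (intro exI[of _ "length m"]) auto

lemma lw_len: "r \<in> rels \<Longrightarrow> length (lw r) = 2 \<or> length (lw r) = 3"
  by (auto simp: rels_eq lw_R)

lemma ov_enum:
  assumes "r1 \<in> (rels :: ('k::field \<times> word) list set)" "r2 \<in> rels" "0 < k" "k < length (lw r1)"
    "drop k (lw r1) = take (length (lw r1) - k) (lw r2)" "length (lw r1) - k < length (lw r2)"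
  shows "(r1 = R2 \<and> r2 = R7 \<and> k = 1) \<or>
    (r1 = R2 \<and> r2 = R9 \<and> k = 1) \<or>
    (r1 = R3 \<and> r2 = R7 \<and> k = 1) \<or>
    (r1 = R3 \<and> r2 = R9 \<and> k = 1) \<or>
    (r1 = R5 \<and> r2 = R6 \<and> k = 1) \<or>
    (r1 = R6 \<and> r2 = R5 \<and> k = 1) \<or>
    (r1 = R7 \<and> r2 = R1 \<and> k = 2) \<or>
    (r1 = R7 \<and> r2 = R3 \<and> k = 2) \<or>
    (r1 = R10 \<and> r2 = R1 \<and> k = 2) \<or>
    (r1 = R10 \<and> r2 = R3 \<and> k = 2)"
proof -
  have "k = 1 \<or> k = 2" using assms(3,4) lw_len[OF assms(1)] by auto
  then show ?thesis using assms(1,2,4,5,6) unfolding rels_eq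
    apply (elim disjE insertE emptyE)
    apply (simp_all only: lw_R)
    apply simp_all
    done
qed

lemma ov_lower:
  assumes "r1 \<in> (rels :: ('k::field \<times> word) list set)" "r2 \<in> rels" "lw r1 = m @ s" "lw r2 = s @ t"
    "m \<noteq> []" "s \<noteq> []" "t \<noteq> []"
  shows "lower (val (lw r1 @ t)) (\<lambda>w. lincomb (sandw [] r1 t) w - (lc r1 / lc r2) * lincomb (sandw m r2 []) w)"
proof -
  obtain k where k: "0 < k" "k < length (lw r1)" "m = take k (lw r1)"
     "drop k (lw r1) = take (length (lw r1) - k) (lw r2)" "length (lw r1) - k < length (lw r2)"
     "t = drop (length (lw r1) - k) (lw r2)"
    using ov_cases[OF assms(3-7)] by blast
  have "(r1 = R2 \<and> r2 = R7 \<and> k = 1) \<or>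
    (r1 = R2 \<and> r2 = R9 \<and> k = 1) \<or>
    (r1 = R3 \<and> r2 = R7 \<and> k = 1) \<or>
    (r1 = R3 \<and> r2 = R9 \<and> k = 1) \<or>
    (r1 = R5 \<and> r2 = R6 \<and> k = 1) \<or>
    (r1 = R6 \<and> r2 = R5 \<and> k = 1) \<or>
    (r1 = R7 \<and> r2 = R1 \<and> k = 2) \<or>
    (r1 = R7 \<and> r2 = R3 \<and> k = 2) \<or>
    (r1 = R10 \<and> r2 = R1 \<and> k = 2) \<or>
    (r1 = R10 \<and> r2 = R3 \<and> k = 2)" using ov_enum[OF assms(1,2) k(1,2,4,5)] .
  then show ?thesis
  proof (elim disjE conjE)
    assume "r1 = R2" "r2 = R7" "k = 1"
    then have "m = [Ld]" "t = [Dli,Lc]" using k by (simp_all add: lw_R)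
    then show ?thesis using cert1 \<open>r1 = R2\<close> \<open>r2 = R7\<close> by simp
  next
    assume "r1 = R2" "r2 = R9" "k = 1"
    then have "m = [Ld]" "t = [Dli,La]" using k by (simp_all add: lw_R)
    then show ?thesis using cert2 \<open>r1 = R2\<close> \<open>r2 = R9\<close> by simp
  next
    assume "r1 = R3" "r2 = R7" "k = 1"
    then have "m = [Lc]" "t = [Dli,Lc]" using k by (simp_all add: lw_R)
    then show ?thesis using cert3 \<open>r1 = R3\<close> \<open>r2 = R7\<close> by simp
  next
    assume "r1 = R3" "r2 = R9" "k = 1"
    then have "m = [Lc]" "t = [Dli,La]" using k by (simp_all add: lw_R)
    then show ?thesis using cert4 \<open>r1 = R3\<close> \<open>r2 = R9\<close> by simp
  next
    assume "r1 = R5" "r2 = R6" "k = 1"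
    then have "m = [Dl]" "t = [Dl]" using k by (simp_all add: lw_R)
    then show ?thesis using cert5 \<open>r1 = R5\<close> \<open>r2 = R6\<close> by simp
  next
    assume "r1 = R6" "r2 = R5" "k = 1"
    then have "m = [Dli]" "t = [Dli]" using k by (simp_all add: lw_R)
    then show ?thesis using cert6 \<open>r1 = R6\<close> \<open>r2 = R5\<close> by simp
  next
    assume "r1 = R7" "r2 = R1" "k = 2"
    then have "m = [Lb,Dli]" "t = [La]" using k by (simp_all add: lw_R)
    then show ?thesis using cert7 \<open>r1 = R7\<close> \<open>r2 = R1\<close> by simp
  next
    assume "r1 = R7" "r2 = R3" "k = 2"
    then have "m = [Lb,Dli]" "t = [Lb]" using k by (simp_all add: lw_R)
    then show ?thesis using cert8 \<open>r1 = R7\<close> \<open>r2 = R3\<close> by simp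
  next
    assume "r1 = R10" "r2 = R1" "k = 2"
    then have "m = [Ld,Dli]" "t = [La]" using k by (simp_all add: lw_R)
    then show ?thesis using cert9 \<open>r1 = R10\<close> \<open>r2 = R1\<close> by simp
  next
    assume "r1 = R10" "r2 = R3" "k = 2"
    then have "m = [Ld,Dli]" "t = [Lb]" using k by (simp_all add: lw_R)
    then show ?thesis using cert10 \<open>r1 = R10\<close> \<open>r2 = R3\<close> by simp
  qed
qed



lemma mul_sum_if: "e * (\<Sum>(e', x)\<leftarrow>r. if P x then e' else 0) = (\<Sum>(e', x)\<leftarrow>r. if P x then e * e' else 0)"
  for e :: "'k::field"
  by (induction r) (auto simp: algebra_simps)

lemma mul_sum_if': "e * (\<Sum>(e', x)\<leftarrow>r. if P x then e' else 0) = (\<Sum>(e', x)\<leftarrow>r. if P x then e' * e else 0)"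
  for e :: "'k::field"
  by (induction r) (auto simp: algebra_simps)

lemma FT_map2: "FT (map (\<lambda>(e, y). (e, U y, R, V y)) L) w = (\<Sum>(e, y)\<leftarrow>L. e * lincomb (sandw (U y) R (V y)) w)"
  by (induction L) (auto simp: FT_def tm_def)

lemma double_sum_eq:
  "(\<Sum>(e, y)\<leftarrow>r2. e * lincomb (sandw u1 r1 (m @ y @ v2)) w) =
   (\<Sum>(e', x)\<leftarrow>r1. e' * lincomb (sandw (u1 @ x @ m) r2 v2) w)"
  for r1 r2 :: "('k::field \<times> word) list"
proof -
  have "(\<Sum>(e, y)\<leftarrow>r2. e * lincomb (sandw u1 r1 (m @ y @ v2)) w) =
      (\<Sum>(e, y)\<leftarrow>r2. \<Sum>(e', x)\<leftarrow>r1. if u1 @ x @ m @ y @ v2 = w then e * e' else 0)"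
    by (simp add: lincomb_sandw mul_sum_if)
  also have "\<dots> = (\<Sum>(e', x)\<leftarrow>r1. \<Sum>(e, y)\<leftarrow>r2. if u1 @ x @ m @ y @ v2 = w then e * e' else 0)"
    using sum_list_swap[where xs = r2 and ys = r1 and f = "\<lambda>(e, y) (e', x). if u1 @ x @ m @ y @ v2 = w then e * e' else 0"]
    by (simp add: case_prod_unfold)
  also have "\<dots> = (\<Sum>(e', x)\<leftarrow>r1. e' * lincomb (sandw (u1 @ x @ m) r2 v2) w)"
    by (simp add: lincomb_sandw mul_sum_if')
  finally show ?thesis .
qed

lemma disj_lower:
  assumes r1: "r1 \<in> (rels :: ('k::field \<times> word) list set)" and r2: "r2 \<in> rels"
  shows "lower (val (u1 @ lw r1 @ m @ lw r2 @ v2))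
    (\<lambda>w. lincomb (sandw u1 r1 (m @ lw r2 @ v2)) w - (lc r1 / lc r2) * lincomb (sandw (u1 @ lw r1 @ m) r2 v2) w)"
proof -
  define l1 where "l1 = lw r1"
  define l2 where "l2 = lw r2"
  define X where "X = map (\<lambda>(e, y). (e, u1, r1, m @ y @ v2)) (filter (\<lambda>(e, y). y \<noteq> l2) r2)"
  define Y where "Y = map (\<lambda>(e, x). (e, u1 @ x @ m, r2, v2)) (filter (\<lambda>(e, x). x \<noteq> l1) r1)"
  have lc2: "lc r2 \<noteq> 0" using lc_nz[OF r2] .
  have eq: "lc r2 * lincomb (sandw u1 r1 (m @ l2 @ v2)) w + FT X w =
        lc r1 * lincomb (sandw (u1 @ l1 @ m) r2 v2) w + FT Y w" for w
  proof -
    have "(\<Sum>(e, y)\<leftarrow>r2. e * lincomb (sandw u1 r1 (m @ y @ v2)) w) =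
        lc r2 * lincomb (sandw u1 r1 (m @ l2 @ v2)) w + FT X w"
      using sum_split_lead[of "\<lambda>y. lincomb (sandw u1 r1 (m @ y @ v2)) w" r2 l2]
      by (simp add: X_def FT_map2 lc_def l2_def)
    moreover have "(\<Sum>(e', x)\<leftarrow>r1. e' * lincomb (sandw (u1 @ x @ m) r2 v2) w) =
        lc r1 * lincomb (sandw (u1 @ l1 @ m) r2 v2) w + FT Y w"
      using sum_split_lead[of "\<lambda>x. lincomb (sandw (u1 @ x @ m) r2 v2) w" r1 l1]
      by (simp add: Y_def FT_map2 lc_def l1_def)
    ultimately show ?thesis by (metis double_sum_eq)
  qed
  show ?thesis unfolding l1_def[symmetric] l2_def[symmetric]
  proof (rule certI[where T = "scaleT (1 / lc r2) Y @ scaleT (- 1 / lc r2) X"])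
    show "valid (scaleT (1 / lc r2) Y @ scaleT (- 1 / lc r2) X)"
      using r1 r2 unfolding valid_append valid_scaleT by (auto simp: valid_def X_def Y_def)
    have kX: "\<forall>t\<in>set X. key t < val (u1 @ l1 @ m @ l2 @ v2)"
    proof
      fix t assume "t \<in> set X"
      then obtain e y where ey: "(e, y) \<in> set r2" "y \<noteq> l2" "t = (e, u1, r1, m @ y @ v2)"
        by (auto simp: X_def)
      have "val y < val l2" using lw_lt[OF r2 ey(1)] ey(2) l2_def by simp
      then have "val ((u1 @ l1 @ m) @ y @ v2) < val ((u1 @ l1 @ m) @ l2 @ v2)" by (rule val_mono_strict)
      then show "key t < val (u1 @ l1 @ m @ l2 @ v2)" using ey(3) by (simp add: key_def l1_def)
    qed
    have kY: "\<forall>t\<in>set Y. key t < val (u1 @ l1 @ m @ l2 @ v2)"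
    proof
      fix t assume "t \<in> set Y"
      then obtain e x where ex: "(e, x) \<in> set r1" "x \<noteq> l1" "t = (e, u1 @ x @ m, r2, v2)"
        by (auto simp: Y_def)
      have "val x < val l1" using lw_lt[OF r1 ex(1)] ex(2) l1_def by simp
      then have "val (u1 @ x @ (m @ l2 @ v2)) < val (u1 @ l1 @ (m @ l2 @ v2))" by (rule val_mono_strict)
      then show "key t < val (u1 @ l1 @ m @ l2 @ v2)" using ex(3) by (simp add: key_def l2_def)
    qed
    show "\<forall>t\<in>set (scaleT (1 / lc r2) Y @ scaleT (- 1 / lc r2) X). key t < val (u1 @ l1 @ m @ l2 @ v2)"
      using kX kY by (simp add: key_scaleT ball_Un)
    show "FT (scaleT (1 / lc r2) Y @ scaleT (- 1 / lc r2) X) =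
      (\<lambda>w. lincomb (sandw u1 r1 (m @ l2 @ v2)) w - lc r1 / lc r2 * lincomb (sandw (u1 @ l1 @ m) r2 v2) w)"
    proof
      fix w
      have "lincomb (sandw u1 r1 (m @ l2 @ v2)) w = (lc r1 * lincomb (sandw (u1 @ l1 @ m) r2 v2) w + FT Y w - FT X w) / lc r2"
        using eq[of w] lc2 by (simp add: field_simps)
      then show "FT (scaleT (1 / lc r2) Y @ scaleT (- 1 / lc r2) X) w =
        lincomb (sandw u1 r1 (m @ l2 @ v2)) w - lc r1 / lc r2 * lincomb (sandw (u1 @ l1 @ m) r2 v2) w"
        using lc2 by (simp add: FT_append FT_scaleT field_simps)
    qed
  qed
qed



lemma compose_lt:
  assumes r1: "r1 \<in> (rels :: ('k::field \<times> word) list set)" and r2: "r2 \<in> rels"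
    and eq: "u1 @ lw r1 @ v1 = u2 @ lw r2 @ v2" and lt: "length u1 < length u2"
  shows "lower (val (u1 @ lw r1 @ v1))
    (\<lambda>w. lincomb (sandw u1 r1 v1) w - (lc r1 / lc r2) * lincomb (sandw u2 r2 v2) w)"
proof -
  obtain us where "u1 = u2 @ us \<and> us @ lw r1 @ v1 = lw r2 @ v2 \<or> u1 @ us = u2 \<and> lw r1 @ v1 = us @ lw r2 @ v2"
    using eq unfolding append_eq_append_conv2 by blast
  then have "u1 @ us = u2 \<and> lw r1 @ v1 = us @ lw r2 @ v2" using lt by auto
  then obtain m where u2: "u2 = u1 @ m" and e1: "lw r1 @ v1 = m @ lw r2 @ v2" by blast
  have disj: ?thesis if m: "m = lw r1 @ s" and v1: "v1 = s @ lw r2 @ v2" for s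
    using disj_lower[OF r1 r2, of u1 s v2] m v1 u2 by simp
  obtain s where "lw r1 = m @ s \<and> s @ v1 = lw r2 @ v2 \<or> lw r1 @ s = m \<and> v1 = s @ lw r2 @ v2"
    using e1 unfolding append_eq_append_conv2 by blast
  then show ?thesis
  proof
    assume "lw r1 @ s = m \<and> v1 = s @ lw r2 @ v2"
    then show ?thesis using disj by blast
  next
    assume a: "lw r1 = m @ s \<and> s @ v1 = lw r2 @ v2"
    show ?thesis
    proof (cases "s = []")
      case True
      then show ?thesis using a disj[of "[]"] by simp
    next
      case False
      have mne: "m \<noteq> []" using u2 lt by auto
      obtain t where "s = lw r2 @ t \<and> t @ v1 = v2 \<or> s @ t = lw r2 \<and> v1 = t @ v2"
        using a unfolding append_eq_append_conv2 by blast
      then show ?thesis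
      proof
        assume "s = lw r2 @ t \<and> t @ v1 = v2"
        then show ?thesis using lw_noincl[OF r1 r2, of m t] a mne by simp
      next
        assume b: "s @ t = lw r2 \<and> v1 = t @ v2"
        have tne: "t \<noteq> []"
        proof
          assume "t = []"
          then show False using lw_noincl[OF r1 r2, of m "[]"] a b mne by simp
        qed
        have "lower (val (lw r1 @ t))
            (\<lambda>w. lincomb (sandw [] r1 t) w - (lc r1 / lc r2) * lincomb (sandw m r2 []) w)"
          using ov_lower[OF r1 r2, of m s t] a b mne False tne by simp
        from lower_sandwich[OF this, of u1 v2]
        show ?thesis using b u2 by simp
      qed
    qed
  qed
qed

lemma compose:
  assumes r1: "r1 \<in> (rels :: ('k::field \<times> word) list set)" and r2: "r2 \<in> rels"
    and eq: "u1 @ lw r1 @ v1 = u2 @ lw r2 @ v2"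
  shows "lower (val (u1 @ lw r1 @ v1))
    (\<lambda>w. lincomb (sandw u1 r1 v1) w - (lc r1 / lc r2) * lincomb (sandw u2 r2 v2) w)"
proof -
  have l1: "lc r1 \<noteq> 0" "lc r2 \<noteq> 0" using lc_nz r1 r2 by auto
  consider "length u1 < length u2" | "length u1 = length u2" | "length u2 < length u1" by linarith
  then show ?thesis
  proof cases
    case 1 then show ?thesis using compose_lt[OF r1 r2 eq] by simp
  next
    case 2
    then have "u1 = u2" "lw r1 @ v1 = lw r2 @ v2" using eq by (auto simp: append_eq_append_conv)
    moreover have "r1 = r2" using lw_prefix[OF r1 r2] calculation(2) by blast
    ultimately have "v1 = v2" by simp
    show ?thesis
      by (rule lower_cong[OF lower_0]) (simp add: \<open>u1 = u2\<close> \<open>v1 = v2\<close> \<open>r1 = r2\<close> l1)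
  next
    case 3
    have h: "lower (val (u1 @ lw r1 @ v1))
      (\<lambda>w. lincomb (sandw u2 r2 v2) w - (lc r2 / lc r1) * lincomb (sandw u1 r1 v1) w)"
      using compose_lt[OF r2 r1 eq[symmetric] 3] eq by simp
    show ?thesis
      by (rule lower_cong[OF lower_lin[OF h h, of "- (lc r1 / lc r2)" 0]]) (simp add: l1 field_simps)
  qed
qed



lemma FT_zero_on: "(\<forall>t\<in>set L. tm t W = 0) \<Longrightarrow> FT L W = 0"
  by (induction L) (auto simp: FT_def)

lemma FT_key_sum: "(\<forall>t\<in>set L. key t = val W \<and> fst (snd (snd t)) \<in> rels) \<Longrightarrow>
    FT L W = (\<Sum>t\<leftarrow>L. fst t * lc (fst (snd (snd t))))"
proof (induction L)
  case Nil then show ?case by (simp add: FT_def)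
next
  case (Cons t L)
  obtain c u r v where t: "t = (c, u, r, v)" by (cases t)
  have "val (u @ lw r @ v) = val W" using Cons.prems t by (simp add: key_def)
  then have "W = u @ lw r @ v" by (simp add: val_inj)
  then have "tm t W = c * lc r" using t by (simp add: tm_at_key)
  then show ?case using Cons by (simp add: FT_Cons t)
qed

lemma indep_aux:
  "\<forall>T. valid T \<longrightarrow> (\<forall>t\<in>set T. key t \<le> N) \<longrightarrow> length (filter (\<lambda>t. key t = N) T) \<le> k \<longrightarrow>
     (\<forall>w. FT T w \<noteq> 0 \<longrightarrow> irr w) \<longrightarrow> FT T = (\<lambda>_. (0::'k::field))"
proof (induction N arbitrary: k rule: less_induct)
  case (less N)
  show ?case
  proof (induction k)
    case 0
    show ?case
    proof (intro allI impI)
      fix T :: "'k trm list"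
      assume v: "valid T" and kb: "\<forall>t\<in>set T. key t \<le> N"
        and c: "length (filter (\<lambda>t. key t = N) T) \<le> 0" and i: "\<forall>w. FT T w \<noteq> 0 \<longrightarrow> irr w"
      have kl: "\<forall>t\<in>set T. key t < N" using kb c by (auto simp: filter_empty_conv le_neq_implies_less)
      show "FT T = (\<lambda>_. 0)"
      proof (cases T)
        case Nil then show ?thesis by (simp add: FT_Nil)
      next
        case (Cons t T')
        then have "0 < N" using kl by auto
        have k1: "\<forall>t\<in>set T. key t \<le> N - 1" using kl by auto
        have c1: "length (filter (\<lambda>t. key t = N - 1) T) \<le> length T" by simp
        have "N - 1 < N" using \<open>0 < N\<close> by simp
        note H = less.IH[OF this, of "length T"]
        show ?thesis using H v k1 c1 i by blast
      qed
    qed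
  next
    case (Suc k)
    show ?case
    proof (intro allI impI)
      fix T :: "'k trm list"
      assume v: "valid T" and kb: "\<forall>t\<in>set T. key t \<le> N"
        and c: "length (filter (\<lambda>t. key t = N) T) \<le> Suc k" and i: "\<forall>w. FT T w \<noteq> 0 \<longrightarrow> irr w"
      show "FT T = (\<lambda>_. 0)"
      proof (cases "length (filter (\<lambda>t. key t = N) T) \<le> k")
        case True then show ?thesis using Suc.IH v kb i by blast
      next
        case False
        define A where "A = filter (\<lambda>t. key t = N) T"
        define B where "B = filter (\<lambda>t. \<not> key t = N) T"
        have lA: "length A = Suc k" using False c A_def by simp
        have FTAB: "FT T w = FT A w + FT B w" for w using FT_filter[of T w "\<lambda>t. key t = N"] A_def B_def by simp
        have vA: "valid A" and vB: "valid B" using v by (auto simp: valid_def A_def B_def)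
        have kA: "\<forall>t\<in>set A. key t = N" by (simp add: A_def)
        have kB: "\<forall>t\<in>set B. key t < N" using kb by (auto simp: B_def le_neq_implies_less)
        obtain t1 A' where A: "A = t1 # A'" using lA by (cases A) auto
        obtain c1 u1 r1 v1 where t1: "t1 = (c1, u1, r1, v1)" by (cases t1)
        define W where "W = u1 @ lw r1 @ v1"
        have r1: "r1 \<in> rels" using vA A t1 by (auto simp: valid_def)
        have NW: "val W = N" using kA A t1 by (simp add: key_def W_def)
        have "\<not> irr W" using irr_not_lw[OF _ r1, of W u1 v1] W_def by blast
        then have FTW: "FT T W = 0" using i by blast
        have FBW: "FT B W = 0"
        proof (rule FT_zero_on, rule ballI)
          fix t assume tB: "t \<in> set B"
          obtain c u r v where tt: "t = (c, u, r, v)" by (cases t)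
          have "r \<in> rels" using vB tB tt by (auto simp: valid_def)
          show "tm t W = 0"
          proof (rule ccontr)
            assume "tm t W \<noteq> 0"
            then have "val W \<le> key t" using tm_supp[OF \<open>r \<in> rels\<close>] tt by blast
            then show False using kB tB NW by force
          qed
        qed
        have FAW: "FT A W = (\<Sum>t\<leftarrow>A. fst t * lc (fst (snd (snd t))))"
          using kA vA NW by (intro FT_key_sum) (auto simp: valid_def)
        show ?thesis
        proof (cases A')
          case Nil
          have "c1 * lc r1 = 0" using FTW FTAB[of W] FBW FAW A Nil t1 by simp
          then have c10: "c1 = 0" using lc_nz[OF r1] by simp
          have "FT T w = FT B w" for w using FTAB[of w] A Nil t1 c10 by (simp add: FT_Cons FT_Nil tm_def)
          then have e: "FT T = FT B" by auto
          have "length (filter (\<lambda>t. key t = N) B) \<le> k" by (simp add: B_def)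
          moreover have "\<forall>t\<in>set B. key t \<le> N" using kB by auto
          moreover have "\<forall>w. FT B w \<noteq> 0 \<longrightarrow> irr w" using i e by simp
          ultimately have "FT B = (\<lambda>_. 0)" using Suc.IH vB by blast
          then show ?thesis using e by simp
        next
          case (Cons t2 A'')
          obtain c2 u2 r2 v2 where t2: "t2 = (c2, u2, r2, v2)" by (cases t2)
          have r2: "r2 \<in> rels" using vA A Cons t2 by (auto simp: valid_def)
          have "val (u2 @ lw r2 @ v2) = val W" using kA A Cons t2 NW by (simp add: key_def)
          then have W2: "u1 @ lw r1 @ v1 = u2 @ lw r2 @ v2" using W_def val_inj by metis
          obtain T' where T': "valid T'" "\<forall>t\<in>set T'. key t < N"
            "(\<lambda>w. lincomb (sandw u1 r1 v1) w - (lc r1 / lc r2) * lincomb (sandw u2 r2 v2) w) = FT T'"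
          proof -
            have "lower N (\<lambda>w. lincomb (sandw u1 r1 v1) w - (lc r1 / lc r2) * lincomb (sandw u2 r2 v2) w)"
              using compose[OF r1 r2 W2] NW W_def by simp
            then show ?thesis using that unfolding lower_def by blast
          qed
          define Tn where "Tn = (c2 + c1 * (lc r1 / lc r2), u2, r2, v2) # A'' @ B @ scaleT c1 T'"
          have eqn: "FT Tn w = FT T w" for w
          proof -
            have h: "FT T' w = lincomb (sandw u1 r1 v1) w - (lc r1 / lc r2) * lincomb (sandw u2 r2 v2) w"
              using fun_cong[OF T'(3), of w] by simp
            have "FT Tn w = (c2 + c1 * (lc r1 / lc r2)) * lincomb (sandw u2 r2 v2) w + FT A'' w + FT B w
                + c1 * (lincomb (sandw u1 r1 v1) w - (lc r1 / lc r2) * lincomb (sandw u2 r2 v2) w)"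
              by (simp add: Tn_def FT_Cons FT_append FT_scaleT tm_def h add.assoc)
            also have "\<dots> = c1 * lincomb (sandw u1 r1 v1) w + c2 * lincomb (sandw u2 r2 v2) w + FT A'' w + FT B w"
              by (simp add: algebra_simps)
            also have "\<dots> = FT T w" using FTAB[of w] A Cons t1 t2 by (simp add: FT_Cons tm_def algebra_simps)
            finally show ?thesis .
          qed
          then have e: "FT Tn = FT T" by auto
          have vn: "valid Tn" using vA vB T'(1) A Cons t2 r2
            by (auto simp: Tn_def valid_def scaleT_def)
          have kn: "\<forall>t\<in>set Tn. key t \<le> N"
          proof -
            have "\<forall>t\<in>set (scaleT c1 T'). key t < N" using T'(2) by (simp add: key_scaleT)
            then show ?thesis using kA kB A Cons t2 by (auto simp: Tn_def key_def)
          qed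
          have cn: "length (filter (\<lambda>t. key t = N) Tn) \<le> k"
          proof -
            have "filter (\<lambda>t. key t = N) A'' = A''" using kA A Cons by (simp add: filter_id_conv)
            moreover have "filter (\<lambda>t. key t = N) B = []" by (simp add: B_def)
            moreover have "filter (\<lambda>t. key t = N) (scaleT c1 T') = []"
            proof -
              have "\<forall>t\<in>set (scaleT c1 T'). key t < N" using T'(2) by (simp add: key_scaleT)
              then show ?thesis unfolding filter_empty_conv by auto
            qed
            ultimately show ?thesis using lA A Cons by (simp add: Tn_def)
          qed
          have "\<forall>w. FT Tn w \<noteq> 0 \<longrightarrow> irr w" using i e by simp
          then have "FT Tn = (\<lambda>_. 0)" using Suc.IH vn kn cn by blast
          then show ?thesis using e by simp
        qed
      qed
    qed
  qed
qed

lemma indep: "valid T \<Longrightarrow> (\<forall>w. FT T w \<noteq> 0 \<longrightarrow> irr w) \<Longrightarrow> FT T = (\<lambda>_. (0::'k::field))"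
proof -
  assume v: "valid T" and i: "\<forall>w. FT T w \<noteq> 0 \<longrightarrow> irr w"
  define N where "N = Max (insert 0 (key ` set T))"
  have "\<forall>t\<in>set T. key t \<le> N" by (auto simp: N_def)
  moreover have "length (filter (\<lambda>t. key t = N) T) \<le> length T" by simp
  ultimately show ?thesis using indep_aux[of N "length T"] v i by blast
qed



definition good :: "(word \<Rightarrow> 'k::field) \<Rightarrow> bool" where
  "good g \<longleftrightarrow> finite (supp g) \<and> (\<forall>w. g w \<noteq> 0 \<longrightarrow> irr w)"

definition Qw :: "word \<Rightarrow> 'k::field itself \<Rightarrow> bool" where
  "Qw w _ \<longleftrightarrow> (\<exists>(g :: word \<Rightarrow> 'k) T. good g \<and> valid T \<and> (\<lambda>x. (if x = w then 1 else 0) - g x) = FT T)"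

lemma span_list:
  "(\<forall>(e, x)\<in>set ps. Qw x TYPE('k::field)) \<Longrightarrow>
    \<exists>(g :: word \<Rightarrow> 'k) T. good g \<and> valid T \<and> (\<lambda>y. lincomb ps y - g y) = FT T"
proof (induction ps)
  case Nil
  show ?case
    by (intro exI[of _ "\<lambda>_. 0"] exI[of _ "[]"]) (simp add: good_def supp_def valid_def FT_Nil lincomb_Nil)
next
  case (Cons p ps)
  obtain e x where p: "p = (e, x)" by (cases p)
  obtain g1 :: "word \<Rightarrow> 'k" and T1 where 1: "good g1" "valid T1" "(\<lambda>y. (if y = x then 1 else 0) - g1 y) = FT T1"
    using Cons.prems p unfolding Qw_def by auto
  obtain g2 :: "word \<Rightarrow> 'k" and T2 where 2: "good g2" "valid T2" "(\<lambda>y. lincomb ps y - g2 y) = FT T2"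
    using Cons by auto
  define g where "g = (\<lambda>y. e * g1 y + g2 y)"
  have "good g"
  proof -
    have "supp g \<subseteq> supp g1 \<union> supp g2" by (auto simp: g_def supp_def)
    then have "finite (supp g)" using 1(1) 2(1) by (auto simp: good_def intro: finite_subset)
    moreover have "\<forall>w. g w \<noteq> 0 \<longrightarrow> irr w"
    proof (intro allI impI)
      fix w assume "g w \<noteq> 0"
      then have "g1 w \<noteq> 0 \<or> g2 w \<noteq> 0" by (auto simp: g_def)
      then show "irr w" using 1(1) 2(1) by (auto simp: good_def)
    qed
    ultimately show ?thesis by (simp add: good_def)
  qed
  moreover have "valid (scaleT e T1 @ T2)" using 1 2 by (simp add: valid_append valid_scaleT)
  moreover have "(\<lambda>y. lincomb (p # ps) y - g y) = FT (scaleT e T1 @ T2)"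
  proof
    fix y
    have a: "FT T1 y = (if y = x then 1 else 0) - g1 y" using fun_cong[OF 1(3), of y] by simp
    have b: "FT T2 y = lincomb ps y - g2 y" using fun_cong[OF 2(3), of y] by simp
    show "lincomb (p # ps) y - g y = FT (scaleT e T1 @ T2) y"
      by (simp add: p lincomb_Cons FT_append FT_scaleT a b g_def algebra_simps)
  qed
  ultimately show ?case by blast
qed

lemma sandw_split: "lincomb (sandw u r v) y =
   lincomb r l * (if u @ l @ v = y then 1 else 0) + lincomb (sandw u (filter (\<lambda>(e, x). x \<noteq> l) r) v) y"
  by (induction r) (auto simp: lincomb_def sandw_def algebra_simps)

lemma span_word: "Qw w TYPE('k::field)"
proof (induction "val w" arbitrary: w rule: less_induct)
  case less
  show ?case
  proof (cases "irr w")
    case True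
    show ?thesis unfolding Qw_def
      by (intro exI[of _ "\<lambda>x. if x = w then (1::'k) else 0"] exI[of _ "[]"])
        (auto simp: good_def supp_def valid_def FT_Nil True)
  next
    case False
    obtain u and r :: "('k \<times> word) list" and v where r: "r \<in> rels" and w: "w = u @ lw r @ v"
      using not_irr_lw[OF False] by blast
    define ps where "ps = sandw u (filter (\<lambda>(e, x). x \<noteq> lw r) r) v"
    have "\<forall>(e, y)\<in>set ps. Qw y TYPE('k)"
    proof (clarify)
      fix e y assume "(e, y) \<in> set ps"
      then obtain x where x: "(e, x) \<in> set r" "x \<noteq> lw r" "y = u @ x @ v" by (auto simp: ps_def sandw_def)
      have "val x < val (lw r)" using lw_lt[OF r x(1) x(2)] .
      then have "val y < val w" using x(3) w val_mono_strict by simp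
      then show "Qw y TYPE('k)" using less by blast
    qed
    then obtain g' :: "word \<Rightarrow> 'k" and T' where g': "good g'" "valid T'" "(\<lambda>y. lincomb ps y - g' y) = FT T'"
      using span_list by blast
    have lc: "lc r \<noteq> 0" using lc_nz[OF r] .
    define g where "g = (\<lambda>y. - (1 / lc r) * g' y)"
    have "good g" using g' lc by (auto simp: good_def g_def supp_def)
    moreover have "valid ((1 / lc r, u, r, v) # scaleT (- (1 / lc r)) T')"
      using g'(2) r by (simp add: valid_def scaleT_def) (auto simp: valid_def)
    moreover have "(\<lambda>x. (if x = w then 1 else 0) - g x) = FT ((1 / lc r, u, r, v) # scaleT (- (1 / lc r)) T')"
    proof
      fix y
      have b: "FT T' y = lincomb ps y - g' y" using fun_cong[OF g'(3), of y] by simp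
      have s: "lincomb (sandw u r v) y = lc r * (if w = y then 1 else 0) + lincomb ps y"
        using sandw_split[of u r v y "lw r"] w by (simp add: ps_def lc_def)
      show "(if y = w then 1 else 0) - g y = FT ((1 / lc r, u, r, v) # scaleT (- (1 / lc r)) T') y"
        using lc by (simp add: FT_Cons FT_scaleT tm_def b s g_def field_simps)
    qed
    ultimately show ?thesis unfolding Qw_def by blast
  qed
qed

lemma lincomb_fun: "distinct xs \<Longrightarrow> lincomb (map (\<lambda>x. (f x, x)) xs) y = (if y \<in> set xs then f y else 0)"
  by (induction xs) (auto simp: lincomb_def)

theorem mainTheorem12:
  shows "(\<forall>f :: word \<Rightarrow> 'k::field. finite (supp f) \<longrightarrow>
            (\<exists>g. finite (supp g) \<and> supp g \<subseteq> normal_words \<and>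
                 (\<lambda>w. f w - g w) \<in> (rel_ideal :: (word \<Rightarrow> 'k) set)))
       \<and> (\<forall>g :: word \<Rightarrow> 'k. finite (supp g) \<and> supp g \<subseteq> normal_words \<and>
            g \<in> rel_ideal \<longrightarrow> g = (\<lambda>_. 0))"
proof (intro conjI allI impI)
  fix f :: "word \<Rightarrow> 'k"
  assume "finite (supp f)"
  then obtain xs where xs: "set xs = supp f" "distinct xs" using finite_distinct_list by blast
  have f: "f = lincomb (map (\<lambda>x. (f x, x)) xs)"
  proof
    fix y show "f y = lincomb (map (\<lambda>x. (f x, x)) xs) y"
      using lincomb_fun[OF xs(2), of f y] xs(1) by (auto simp: supp_def)
  qed
  have "\<forall>(e, x)\<in>set (map (\<lambda>x. (f x, x)) xs). Qw x TYPE('k)" using span_word by auto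
  then obtain g :: "word \<Rightarrow> 'k" and T where g: "good g" "valid T"
    "(\<lambda>y. lincomb (map (\<lambda>x. (f x, x)) xs) y - g y) = FT T"
    using span_list by blast
  have "(\<lambda>w. f w - g w) \<in> rel_ideal" using ideal_FT[OF g(2)] g(3) f by simp
  moreover have "finite (supp g)" "supp g \<subseteq> normal_words"
    using g(1) by (auto simp: good_def supp_def normal_words_eq)
  ultimately show "\<exists>g. finite (supp g) \<and> supp g \<subseteq> normal_words \<and> (\<lambda>w. f w - g w) \<in> rel_ideal"
    by blast
next
  fix g :: "word \<Rightarrow> 'k"
  assume a: "finite (supp g) \<and> supp g \<subseteq> normal_words \<and> g \<in> rel_ideal"
  then obtain T where T: "valid T" "g = FT T" using FT_ideal by blast
  have "\<forall>w. FT T w \<noteq> 0 \<longrightarrow> irr w" using a T by (auto simp: supp_def normal_words_eq)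
  then show "g = (\<lambda>_. 0)" using indep[OF T(1)] T(2) by simp
qed


end
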